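(* Let $T$ be a finite tree and $G=T^2$ its square. Then $G$ is co-chordal (i.e. its complement $G^c$ is chordal) if and only if $T$ is one of: (i) the path $L_n$ with $2\le n\le 5$; (ii) a star graph; (iii) a (partially) whiskered star.
   Context: All graphs are finite and simple. For a graph $G$, the square $G^2$ is the graph on $V(G)$ whose edges are the pairs $\{x,y\}$ with $x\neq y$ and $\mathrm{dist}_G(x,y)\in\{1,2\}$. $G^c$ is the graph on $V(G)$ whose edges are the non-edges of $G$. A graph is chordal if it has no induced cycle of length $\ge4$. $L_n$ denotes the path on $n$ vertices. A star graph is $K_{1,t}$ ($t\ge1$). A (partially) whiskered star is the tree with vertex set $\{x_0,x_1,\dots,x_n,y_1,\dots,y_m\}$, where $n\ge1$ and $1\le m\le n$, and edge set $\{\{x_0,x_i\}:1\le i\le n\}\cup\{\{x_i,y_i\}:1\le i\le m\}$. *)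

theory Defs
  imports Main
begin

type_synonym 'a graph = "'a set \<times> 'a set set"

definition simple_graph :: "'a graph \<Rightarrow> bool" where
  "simple_graph G \<longleftrightarrow> finite (fst G) \<and>
     (\<forall>e\<in>snd G. \<exists>x y. x \<in> fst G \<and> y \<in> fst G \<and> x \<noteq> y \<and> e = {x, y})"

definition adj :: "'a graph \<Rightarrow> 'a \<Rightarrow> 'a \<Rightarrow> bool" where
  "adj G x y \<longleftrightarrow> {x, y} \<in> snd G"

definition connected_graph :: "'a graph \<Rightarrow> bool" where
  "connected_graph G \<longleftrightarrow>
     (\<forall>x\<in>fst G. \<forall>y\<in>fst G. (x, y) \<in> {(u, v). adj G u v}\<^sup>*)"

definition has_cycle :: "'a graph \<Rightarrow> bool" where
  "has_cycle G \<longleftrightarrow> (\<exists>vs. length vs \<ge> 3 \<and> distinct vs \<and> set vs \<subseteq> fst G \<and>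
     (\<forall>i < length vs. adj G (vs ! i) (vs ! ((i + 1) mod length vs))))"

definition is_tree :: "'a graph \<Rightarrow> bool" where
  "is_tree G \<longleftrightarrow> simple_graph G \<and> fst G \<noteq> {} \<and> connected_graph G \<and> \<not> has_cycle G"

definition graph_square :: "'a graph \<Rightarrow> 'a graph" where
  "graph_square G = (fst G, {{x, y} | x y. x \<in> fst G \<and> y \<in> fst G \<and> x \<noteq> y \<and>
      (adj G x y \<or> (\<exists>z \<in> fst G. adj G x z \<and> adj G z y))})"

definition graph_complement :: "'a graph \<Rightarrow> 'a graph" where
  "graph_complement G = (fst G, {{x, y} | x y. x \<in> fst G \<and> y \<in> fst G \<and> x \<noteq> y \<and>
      \<not> adj G x y})"

definition has_induced_cycle_ge4 :: "'a graph \<Rightarrow> bool" where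
  "has_induced_cycle_ge4 G \<longleftrightarrow> (\<exists>vs. length vs \<ge> 4 \<and> distinct vs \<and> set vs \<subseteq> fst G \<and>
     (\<forall>i < length vs. \<forall>j < length vs.
        adj G (vs ! i) (vs ! j) \<longleftrightarrow>
          (j = (i + 1) mod length vs \<or> i = (j + 1) mod length vs)))"

definition chordal :: "'a graph \<Rightarrow> bool" where
  "chordal G \<longleftrightarrow> \<not> has_induced_cycle_ge4 G"

definition graph_iso :: "'a graph \<Rightarrow> 'b graph \<Rightarrow> bool" where
  "graph_iso G H \<longleftrightarrow> (\<exists>f. bij_betw f (fst G) (fst H) \<and>
     (\<forall>x\<in>fst G. \<forall>y\<in>fst G. adj G x y \<longleftrightarrow> adj H (f x) (f y)))"

definition path_graph :: "nat \<Rightarrow> nat graph" where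
  "path_graph n = ({0..<n}, {{i, i + 1} | i. i + 1 < n})"

definition star_graph :: "nat \<Rightarrow> nat graph" where
  "star_graph t = ({0..t}, {{0, i} | i. 1 \<le> i \<and> i \<le> t})"

text \<open>Partially whiskered star: x_i = (i,0) for 0 \<le> i \<le> n, y_i = (i,1) for 1 \<le> i \<le> m.\<close>
definition whiskered_star :: "nat \<Rightarrow> nat \<Rightarrow> (nat \<times> nat) graph" where
  "whiskered_star n m =
    ({(i, 0) | i. i \<le> n} \<union> {(i, 1) | i. 1 \<le> i \<and> i \<le> m},
     {{(0, 0), (i, 0)} | i. 1 \<le> i \<and> i \<le> n} \<union> {{(i, 0), (i, 1)} | i. 1 \<le> i \<and> i \<le> m})"

end

theory Submission
  imports Defs
begin


lemma adj_sym: "adj G x y = adj G y x"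
  by (simp add: adj_def insert_commute)

lemma simple_adjD:
  assumes "simple_graph G" "adj G x y"
  shows "x \<in> fst G \<and> y \<in> fst G \<and> x \<noteq> y"
proof -
  from assms obtain a b where "a \<in> fst G" "b \<in> fst G" "a \<noteq> b" "{x,y} = {a,b}"
    unfolding simple_graph_def adj_def by blast
  thus ?thesis by (auto simp: doubleton_eq_iff)
qed

lemma adj_square:
  "adj (graph_square G) x y \<longleftrightarrow> x \<in> fst G \<and> y \<in> fst G \<and> x \<noteq> y \<and>
     (adj G x y \<or> (\<exists>z\<in>fst G. adj G x z \<and> adj G z y))"
proof -
  have "adj (graph_square G) x y \<longleftrightarrow> (\<exists>a b. {x,y} = {a,b} \<and> a \<in> fst G \<and> b \<in> fst G \<and> a \<noteq> b \<and>
      (adj G a b \<or> (\<exists>z \<in> fst G. adj G a z \<and> adj G z b)))"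
    by (simp add: graph_square_def adj_def[of "(_,_)"])
  also have "\<dots> \<longleftrightarrow> x \<in> fst G \<and> y \<in> fst G \<and> x \<noteq> y \<and>
     (adj G x y \<or> (\<exists>z\<in>fst G. adj G x z \<and> adj G z y))"
    apply (auto simp: doubleton_eq_iff)
    by (metis adj_sym)+
  finally show ?thesis .
qed

lemma adj_compl:
  "adj (graph_complement G) x y \<longleftrightarrow> x \<in> fst G \<and> y \<in> fst G \<and> x \<noteq> y \<and> \<not> adj G x y"
proof -
  have "adj (graph_complement G) x y \<longleftrightarrow> (\<exists>a b. {x,y} = {a,b} \<and> a \<in> fst G \<and> b \<in> fst G \<and> a \<noteq> b \<and>
      \<not> adj G a b)"
    by (simp add: graph_complement_def adj_def[of "(_,_)"])
  also have "\<dots> \<longleftrightarrow> x \<in> fst G \<and> y \<in> fst G \<and> x \<noteq> y \<and> \<not> adj G x y"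
    by (auto simp: doubleton_eq_iff adj_sym)
  finally show ?thesis .
qed

definition walk :: "'a graph \<Rightarrow> 'a list \<Rightarrow> bool" where
  "walk G xs \<longleftrightarrow> (\<forall>i. Suc i < length xs \<longrightarrow> adj G (xs!i) (xs!Suc i))"

definition nb :: "'a list \<Rightarrow> bool" where
  "nb xs \<longleftrightarrow> (\<forall>i. Suc (Suc i) < length xs \<longrightarrow> xs!i \<noteq> xs!Suc (Suc i))"

lemma walk_simps[simp]:
  "walk G []" "walk G [x]" "walk G (x#y#xs) \<longleftrightarrow> adj G x y \<and> walk G (y#xs)"
proof -
  show "walk G []" "walk G [x]" by (auto simp: walk_def)
  show "walk G (x#y#xs) \<longleftrightarrow> adj G x y \<and> walk G (y#xs)"
    unfolding walk_def
  proof (intro iffI conjI allI impI)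
    fix i assume "\<forall>i. Suc i < length (x # y # xs) \<longrightarrow> adj G ((x # y # xs) ! i) ((x # y # xs) ! Suc i)"
      "Suc i < length (y # xs)"
    thus "adj G ((y # xs) ! i) ((y # xs) ! Suc i)" by (auto dest: spec[of _ "Suc i"])
  next
    assume "\<forall>i. Suc i < length (x # y # xs) \<longrightarrow> adj G ((x # y # xs) ! i) ((x # y # xs) ! Suc i)"
    thus "adj G x y" by (auto dest: spec[of _ 0])
  next
    fix i assume a: "adj G x y \<and> (\<forall>i. Suc i < length (y # xs) \<longrightarrow> adj G ((y # xs) ! i) ((y # xs) ! Suc i))"
      and "Suc i < length (x # y # xs)"
    thus "adj G ((x # y # xs) ! i) ((x # y # xs) ! Suc i)"
      by (cases i) auto
  qed
qed

lemma nb_simps[simp]: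
  "nb []" "nb [x]" "nb [x,y]" "nb (x#y#z#xs) \<longleftrightarrow> x \<noteq> z \<and> nb (y#z#xs)"
proof -
  show "nb []" "nb [x]" "nb [x,y]" by (auto simp: nb_def)
  show "nb (x#y#z#xs) \<longleftrightarrow> x \<noteq> z \<and> nb (y#z#xs)"
    unfolding nb_def
  proof (intro iffI conjI allI impI)
    fix i assume "\<forall>i. Suc (Suc i) < length (x # y # z # xs) \<longrightarrow> (x # y # z # xs) ! i \<noteq> (x # y # z # xs) ! Suc (Suc i)"
      "Suc (Suc i) < length (y # z # xs)"
    thus "(y # z # xs) ! i \<noteq> (y # z # xs) ! Suc (Suc i)" by (auto dest: spec[of _ "Suc i"])
  next
    assume "\<forall>i. Suc (Suc i) < length (x # y # z # xs) \<longrightarrow> (x # y # z # xs) ! i \<noteq> (x # y # z # xs) ! Suc (Suc i)"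
    thus "x \<noteq> z" by (auto dest: spec[of _ 0])
  next
    fix i assume "x \<noteq> z \<and> (\<forall>i. Suc (Suc i) < length (y # z # xs) \<longrightarrow> (y # z # xs) ! i \<noteq> (y # z # xs) ! Suc (Suc i))"
      "Suc (Suc i) < length (x # y # z # xs)"
    thus "(x # y # z # xs) ! i \<noteq> (x # y # z # xs) ! Suc (Suc i)"
      by (cases i) auto
  qed
qed



locale tree_ctx =
  fixes T :: "'a graph"
  assumes tree: "is_tree T"
begin

lemma simple: "simple_graph T" using tree by (simp add: is_tree_def)
lemma nocyc: "\<not> has_cycle T" using tree by (simp add: is_tree_def)
lemma conn: "connected_graph T" using tree by (simp add: is_tree_def)
lemma adjD: "adj T x y \<Longrightarrow> x \<in> fst T \<and> y \<in> fst T \<and> x \<noteq> y"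
  using simple_adjD[OF simple] by blast

lemma cycle_of_list:
  assumes "distinct vs" "length vs \<ge> 3" "walk T vs" "adj T (last vs) (hd vs)"
  shows False
proof -
  have set: "set vs \<subseteq> fst T"
  proof
    fix x assume "x \<in> set vs"
    then obtain i where i: "i < length vs" "vs!i = x" by (auto simp: in_set_conv_nth)
    show "x \<in> fst T"
    proof (cases "Suc i < length vs")
      case True with assms(3) i show ?thesis using adjD unfolding walk_def by blast
    next
      case False
      then have "i = length vs - 1" using i by simp
      moreover have "vs \<noteq> []" using assms(2) by auto
      ultimately have "x = last vs" using i by (simp add: last_conv_nth)
      then show ?thesis using adjD assms(4) by blast
    qed
  qed
  have "\<forall>i < length vs. adj T (vs!i) (vs!((i+1) mod length vs))"
  proof (intro allI impI)
    fix i assume i: "i < length vs"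
    show "adj T (vs!i) (vs!((i+1) mod length vs))"
    proof (cases "Suc i < length vs")
      case True thus ?thesis using assms(3) by (simp add: walk_def)
    next
      case False
      then have e: "i = length vs - 1" "Suc i = length vs" using i by auto
      have ne: "vs \<noteq> []" using assms(2) by auto
      have "(i+1) mod length vs = 0" using e by simp
      then show ?thesis using assms(4) e ne by (simp add: last_conv_nth hd_conv_nth)
    qed
  qed
  then have "has_cycle T" using assms set unfolding has_cycle_def by blast
  thus False using nocyc by simp
qed

lemma no_triangle: "adj T x y \<Longrightarrow> adj T y z \<Longrightarrow> adj T z x \<Longrightarrow> False"
  using cycle_of_list[of "[x,y,z]"] adjD by auto

lemma walk_nb_distinct:
  "walk T xs \<Longrightarrow> nb xs \<Longrightarrow> distinct xs"
proof (induction xs rule: rev_induct)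
  case Nil thus ?case by simp
next
  case (snoc y ys)
  have wys: "walk T ys" unfolding walk_def
  proof (intro allI impI)
    fix i assume "Suc i < length ys"
    thus "adj T (ys!i) (ys!Suc i)" using snoc.prems(1) unfolding walk_def
      by (auto simp: nth_append dest: spec[of _ i])
  qed
  have nys: "nb ys" unfolding nb_def
  proof (intro allI impI)
    fix i assume "Suc (Suc i) < length ys"
    thus "ys!i \<noteq> ys!Suc (Suc i)" using snoc.prems(2) unfolding nb_def
      by (auto simp: nth_append dest: spec[of _ i])
  qed
  have dys: "distinct ys" using snoc.IH wys nys by simp
  show ?case
  proof (rule ccontr)
    assume "\<not> distinct (ys @ [y])"
    with dys have "y \<in> set ys" by simp
    then obtain k where k: "k < length ys" "ys!k = y" by (auto simp: in_set_conv_nth)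
    define n where "n = length ys"
    have n1: "Suc (n - 1) < length (ys @ [y])" using k n_def by simp
    have "adj T ((ys@[y])!(n-1)) ((ys@[y])!Suc(n-1))"
      using snoc.prems(1) n1 unfolding walk_def by blast
    moreover have "Suc (n-1) = n" "n - 1 < n" using k n_def by auto
    ultimately have lastadj: "adj T (ys!(n - 1)) y" by (simp add: nth_append n_def)
    consider "k = n - 1" | "k = n - 2" "n \<ge> 2" | "k + 3 \<le> n" using k n_def by linarith
    then show False
    proof cases
      case 1
      then show False using lastadj k adjD by auto
    next
      case 2
      have "Suc (Suc (n-2)) < length (ys @ [y])" using 2 n_def by simp
      then have "(ys @ [y])!(n-2) \<noteq> (ys @ [y])!Suc (Suc (n-2))"
        using snoc.prems(2) unfolding nb_def by blast
      moreover have "Suc (Suc (n-2)) = n" using 2 by simp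
      ultimately show False using 2 k n_def by (simp add: nth_append)
    next
      case 3
      define vs where "vs = drop k ys"
      have "distinct vs" using dys vs_def by simp
      moreover have "length vs \<ge> 3" using 3 vs_def n_def by simp
      moreover have "walk T vs" unfolding walk_def
      proof (intro allI impI)
        fix i assume "Suc i < length vs"
        then have "Suc (k+i) < length ys" using vs_def by simp
        then have "adj T (ys!(k+i)) (ys!Suc (k+i))" using wys unfolding walk_def by blast
        thus "adj T (vs!i) (vs!Suc i)" using vs_def k by simp
      qed
      moreover have "last vs = ys!(n-1)" using vs_def 3 n_def
        by (simp add: last_conv_nth)
      moreover have "hd vs = y" using vs_def k by (simp add: hd_drop_conv_nth)
      ultimately show False using cycle_of_list lastadj by metis
    qed
  qed
qed

definition far :: "'a \<Rightarrow> 'a \<Rightarrow> bool" where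
  "far x y \<longleftrightarrow> x \<in> fst T \<and> y \<in> fst T \<and> x \<noteq> y \<and> \<not> adj T x y \<and>
     \<not> (\<exists>z\<in>fst T. adj T x z \<and> adj T z y)"

lemma far_sym: "far x y \<longleftrightarrow> far y x"
  unfolding far_def using adj_sym by metis

lemma fst_sq: "fst (graph_square G) = fst G" by (simp add: graph_square_def)

lemma CA_far: "adj (graph_complement (graph_square T)) x y \<longleftrightarrow> far x y"
  by (auto simp: adj_compl adj_square far_def fst_sq)

lemma walk_set: "walk T xs \<Longrightarrow> length xs \<ge> 2 \<Longrightarrow> x \<in> set xs \<Longrightarrow> x \<in> fst T"
proof -
  assume w: "walk T xs" and l: "length xs \<ge> 2" and x: "x \<in> set xs"
  then obtain i where i: "i < length xs" "xs!i = x" by (auto simp: in_set_conv_nth)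
  show ?thesis
  proof (cases "Suc i < length xs")
    case True thus ?thesis using w i adjD unfolding walk_def by blast
  next
    case False
    then have "Suc (i - 1) < length xs" "Suc (i-1) = i" using l i by auto
    thus ?thesis using w i adjD unfolding walk_def by metis
  qed
qed

lemma far_path:
  assumes w: "walk T xs" and nbx: "nb xs" and l: "length xs \<ge> 4"
  shows "far (hd xs) (last xs)"
proof -
  define n where "n = length xs"
  have ne: "xs \<noteq> []" using l by auto
  have d: "distinct xs" using walk_nb_distinct w nbx by blast
  have hd: "hd xs = xs!0" using ne by (simp add: hd_conv_nth)
  have lst: "last xs = xs!(n-1)" using ne n_def by (simp add: last_conv_nth)
  have mem: "hd xs \<in> fst T" "last xs \<in> fst T" using walk_set[OF w] l ne by auto
  have "xs!0 \<noteq> xs!(n-1)" proof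
    assume "xs!0 = xs!(n-1)"
    moreover have "0 < length xs" "n - 1 < length xs" using l n_def by auto
    ultimately have "0 = n - 1" using nth_eq_iff_index_eq[OF d] by blast
    thus False using l n_def by simp
  qed
  then have neq: "hd xs \<noteq> last xs" using hd lst by simp
  have nadj: "\<not> adj T (hd xs) (last xs)"
    using cycle_of_list[OF d _ w] l adj_sym by fastforce
  have ncom: "\<not> (\<exists>z\<in>fst T. adj T (hd xs) z \<and> adj T z (last xs))"
  proof
    assume "\<exists>z\<in>fst T. adj T (hd xs) z \<and> adj T z (last xs)"
    then obtain z where z: "adj T (hd xs) z" "adj T z (last xs)" by blast
    show False
    proof (cases "z = xs!(n-2)")
      case True
      define vs where "vs = butlast xs"
      have "distinct vs" using d vs_def by (simp add: distinct_butlast)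
      moreover have "length vs \<ge> 3" using l vs_def by simp
      moreover have "walk T vs" unfolding walk_def
      proof (intro allI impI)
        fix i assume "Suc i < length vs"
        then have "Suc i < length xs" "i < length vs" using vs_def by auto
        then show "adj T (vs!i) (vs!Suc i)" using w vs_def \<open>Suc i < length vs\<close>
          unfolding walk_def by (simp add: nth_butlast)
      qed
      moreover have "last vs = z"
      proof -
        have lv: "length vs = n - 1" using l vs_def n_def by auto
        then have "vs \<noteq> []" using l n_def by auto
        moreover have "n - 2 = length vs - 1" using lv by simp
        ultimately have "last vs = vs!(n-2)" by (simp add: last_conv_nth)
        also have "\<dots> = xs!(n-2)" using vs_def l n_def by (simp add: nth_butlast)
        finally show ?thesis using True by simp
      qed
      moreover have "hd vs = hd xs" using vs_def l
        by (cases xs) auto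
      ultimately show False using cycle_of_list z(1) adj_sym by metis
    next
      case False
      define zs where "zs = xs @ [z]"
      have wz: "walk T zs" unfolding walk_def
      proof (intro allI impI)
        fix i assume i: "Suc i < length zs"
        show "adj T (zs!i) (zs!Suc i)"
        proof (cases "Suc i < length xs")
          case True thus ?thesis using w zs_def unfolding walk_def by (simp add: nth_append)
        next
          case False
          then have "i = n - 1" "Suc i = n" using i zs_def n_def by auto
          moreover have "adj T (last xs) z" using z(2) adj_sym by metis
          ultimately show ?thesis using zs_def lst by (simp add: nth_append n_def)
        qed
      qed
      have nz: "nb zs" unfolding nb_def
      proof (intro allI impI)
        fix i assume i: "Suc (Suc i) < length zs"
        show "zs!i \<noteq> zs!Suc (Suc i)"
        proof (cases "Suc (Suc i) < length xs")
          case True thus ?thesis using nbx zs_def unfolding nb_def by (simp add: nth_append)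
        next
          case False
          then have "i = n - 2" "Suc (Suc i) = n" using i zs_def n_def by auto
          thus ?thesis using False zs_def \<open>z \<noteq> xs!(n-2)\<close> by (simp add: nth_append n_def)
        qed
      qed
      have "distinct zs" using walk_nb_distinct wz nz by blast
      moreover have "length zs \<ge> 3" using l zs_def by simp
      moreover have "adj T (last zs) (hd zs)" using zs_def z(1) ne adj_sym[of T z "hd xs"] by simp
      ultimately show False using cycle_of_list wz by blast
    qed
  qed
  show ?thesis unfolding far_def using mem neq nadj ncom by blast
qed

end


lemma less4: "(i::nat) < 4 \<longleftrightarrow> i = 0 \<or> i = 1 \<or> i = 2 \<or> i = 3" by arith

lemma all4: "(\<forall>i<(4::nat). P i) \<longleftrightarrow> P 0 \<and> P 1 \<and> P 2 \<and> P 3"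
  using less4 by auto

definition good :: "'a graph \<Rightarrow> 'a \<Rightarrow> bool" where
  "good G c \<longleftrightarrow> c \<in> fst G \<and> (\<forall>u\<in>fst G. adj G c u \<longrightarrow>
     (\<forall>w\<in>fst G. \<forall>w'\<in>fst G. adj G u w \<longrightarrow> adj G u w' \<longrightarrow> w \<noteq> c \<longrightarrow> w' \<noteq> c \<longrightarrow> w = w') \<and>
     (\<forall>w\<in>fst G. \<forall>x\<in>fst G. adj G u w \<longrightarrow> w \<noteq> c \<longrightarrow> adj G w x \<longrightarrow> x = u))"

lemma split_no_c4:
  assumes KI: "\<forall>x\<in>set vs. x \<in> K \<or> x \<in> I"
    and K: "\<forall>x\<in>K. \<forall>y\<in>K. x \<noteq> y \<longrightarrow> adj G x y"
    and I: "\<forall>x\<in>I. \<forall>y\<in>I. \<not> adj G x y"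
    and d: "distinct vs" and l: "length vs \<ge> 4"
    and iff: "\<forall>i<length vs. \<forall>j<length vs. adj G (vs!i) (vs!j) \<longleftrightarrow>
        (j = (i+1) mod length vs \<or> i = (j+1) mod length vs)"
  shows False
proof -
  define n where "n = length vs"
  have A: "\<And>i j. i < n \<Longrightarrow> j < n \<Longrightarrow> adj G (vs!i) (vs!j) \<longleftrightarrow> (j = (i+1) mod n \<or> i = (j+1) mod n)"
    using iff n_def by blast
  have D: "\<And>i j. i < n \<Longrightarrow> j < n \<Longrightarrow> i \<noteq> j \<Longrightarrow> vs!i \<noteq> vs!j"
    using d n_def nth_eq_iff_index_eq by blast
  have M: "\<And>i. i < n \<Longrightarrow> vs!i \<in> K \<or> vs!i \<in> I" using KI n_def by auto
  have n4: "n \<ge> 4" using l n_def by simp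
  have m1: "(0+1) mod n = 1" "(1+1) mod n = 2" "(2+1) mod n = 3" using n4 by auto
  have m2: "(n-1+1) mod n = 0" using n4 by simp
  have m3: "(3+1) mod n \<noteq> 1"
  proof (cases "n = 4")
    case True thus ?thesis by simp
  next
    case False thus ?thesis using n4 by simp
  qed
  have m4: "(0::nat) mod n = 0" "1 mod n = 1" "2 mod n = 2" "3 mod n = 3" using n4 by auto
  have v0: "vs!0 \<in> K"
  proof (rule ccontr)
    assume "vs!0 \<notin> K"
    then have i0: "vs!0 \<in> I" using M[of 0] n4 by auto
    have "adj G (vs!0) (vs!1)" using A[of 0 1] n4 m1 by simp
    then have k1: "vs!1 \<in> K" using M[of 1] I i0 n4 by auto
    have "adj G (vs!(n-1)) (vs!0)" using A[of "n-1" 0] n4 m2 by simp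
    then have k2: "vs!(n-1) \<in> K" using M[of "n-1"] I i0 n4 by auto
    have "vs!1 \<noteq> vs!(n-1)" using D[of 1 "n-1"] n4 by simp
    then have "adj G (vs!1) (vs!(n-1))" using K k1 k2 by blast
    moreover have "\<not> (n - 1 = (1+1) mod n \<or> 1 = (n-1+1) mod n)" using m1 m2 n4 by simp
    ultimately show False using A[of 1 "n-1"] n4 by simp
  qed
  have v2: "vs!2 \<in> K"
  proof (rule ccontr)
    assume "vs!2 \<notin> K"
    then have i0: "vs!2 \<in> I" using M[of 2] n4 by auto
    have "adj G (vs!1) (vs!2)" using A[of 1 2] n4 m1 by simp
    then have k1: "vs!1 \<in> K" using M[of 1] I i0 n4 by auto
    have "adj G (vs!2) (vs!3)" using A[of 2 3] n4 m1 by simp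
    then have k2: "vs!3 \<in> K" using M[of 3] I i0 n4 by auto
    have "vs!1 \<noteq> vs!3" using D[of 1 3] n4 by simp
    then have "adj G (vs!1) (vs!3)" using K k1 k2 by blast
    moreover have "\<not> (3 = (1+1) mod n \<or> 1 = (3+1) mod n)" using m1 m3 by simp
    ultimately show False using A[of 1 3] n4 by simp
  qed
  have "vs!0 \<noteq> vs!2" using D[of 0 2] n4 by simp
  then have "adj G (vs!0) (vs!2)" using K v0 v2 by blast
  moreover have "\<not> (2 = (0+1) mod n \<or> 0 = (2+1) mod n)" using m1 by simp
  ultimately show False using A[of 0 2] n4 by simp
qed

context tree_ctx
begin

lemma far_irrefl: "\<not> far x x" by (simp add: far_def)

lemma c4:
  assumes "far a b" "far b c" "far c d" "far d a" "\<not> far a c" "\<not> far b d" "a \<noteq> c" "b \<noteq> d"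
  shows "has_induced_cycle_ge4 (graph_complement (graph_square T))"
proof -
  define vs where "vs = [a,b,c,d]"
  have dist: "distinct vs" using assms vs_def by (auto simp: far_def)
  have set: "set vs \<subseteq> fst (graph_complement (graph_square T))"
    using assms vs_def by (auto simp: far_def graph_complement_def graph_square_def)
  have fs: "far b a" "far c b" "far d c" "far a d" "\<not> far c a" "\<not> far d b"
    using assms(1-6) far_sym[of a b] far_sym[of b c] far_sym[of c d] far_sym[of d a]
      far_sym[of a c] far_sym[of b d] by simp_all
  have L: "length vs = 4" using vs_def by simp
  have "\<forall>i<4. \<forall>j<4. far (vs!i) (vs!j) \<longleftrightarrow> (j = (i+1) mod 4 \<or> i = (j+1) mod 4)"
    unfolding all4 vs_def using assms fs by (simp add: far_irrefl)
  then have "\<forall>i<length vs. \<forall>j<length vs. adj (graph_complement (graph_square T)) (vs!i) (vs!j) \<longleftrightarrow>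
        (j = (i+1) mod length vs \<or> i = (j+1) mod length vs)"
    unfolding CA_far L .
  then show ?thesis unfolding has_induced_cycle_ge4_def
    apply (intro exI[of _ vs])
    using dist set L by simp
qed

end

lemma adjS: "adj G x y \<Longrightarrow> adj G y x" by (simp add: adj_sym)

context tree_ctx
begin
lemma notfar_common: "adj T a u \<Longrightarrow> adj T u b \<Longrightarrow> \<not> far a b"
  using adjD by (auto simp: far_def)

lemma notfar_adj: "adj T a b \<Longrightarrow> \<not> far a b"
  by (auto simp: far_def)

lemma F1:
  assumes ch: "\<not> has_induced_cycle_ge4 (graph_complement (graph_square T))"
    and "adj T u v" "adj T u a" "adj T u b" "adj T v d" "adj T v e"
    "a \<noteq> b" "d \<noteq> e" "a \<noteq> v" "b \<noteq> v" "d \<noteq> u" "e \<noteq> u"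
  shows False
proof -
  have s: "adj T a u" "adj T b u" "adj T v u" "adj T d v" "adj T e v"
    using adjS[OF assms(3)] adjS[OF assms(4)] adjS[OF assms(2)] adjS[OF assms(5)] adjS[OF assms(6)] .
  have f1: "far a d" using far_path[of "[a,u,v,d]"] assms s by simp
  have f2: "far d b" using far_path[of "[d,v,u,b]"] assms s by simp
  have f3: "far b e" using far_path[of "[b,u,v,e]"] assms s by simp
  have f4: "far e a" using far_path[of "[e,v,u,a]"] assms s by simp
  have "\<not> far a b" using notfar_common s assms by blast
  moreover have "\<not> far d e" using notfar_common s assms by blast
  ultimately show False using c4[OF f1 f2 f3 f4] ch assms by blast
qed

lemma F2:
  assumes ch: "\<not> has_induced_cycle_ge4 (graph_complement (graph_square T))"
    and "adj T u a" "adj T u b" "adj T u d" "a \<noteq> b" "a \<noteq> d" "b \<noteq> d"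
    "adj T d e" "e \<noteq> u" "adj T e f" "f \<noteq> d"
  shows False
proof -
  have s: "adj T a u" "adj T b u" "adj T d u" "adj T e d" "adj T f e"
    using adjS[OF assms(2)] adjS[OF assms(3)] adjS[OF assms(4)] adjS[OF assms(8)] adjS[OF assms(10)] .
  have f1: "far a e" using far_path[of "[a,u,d,e]"] assms s by simp
  have f2: "far e b" using far_path[of "[e,d,u,b]"] assms s by simp
  have f3: "far b f" using far_path[of "[b,u,d,e,f]"] assms s by simp
  have f4: "far f a" using far_path[of "[f,e,d,u,a]"] assms s by simp
  have "\<not> far a b" using notfar_common s assms by blast
  moreover have "\<not> far e f" using notfar_adj assms by blast
  moreover have "e \<noteq> f" using adjD assms by blast
  ultimately show False using c4[OF f1 f2 f3 f4] ch assms by blast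
qed

lemma F3:
  assumes ch: "\<not> has_induced_cycle_ge4 (graph_complement (graph_square T))"
    and w: "walk T [v0,v1,v2,v3,v4,v5]" and n: "nb [v0,v1,v2,v3,v4,v5]"
  shows False
proof -
  have a: "adj T v0 v1" "adj T v1 v2" "adj T v2 v3" "adj T v3 v4" "adj T v4 v5" using w by auto
  have s: "adj T v1 v0" "adj T v2 v1" "adj T v3 v2" "adj T v4 v3" "adj T v5 v4"
    using adjS[OF a(1)] adjS[OF a(2)] adjS[OF a(3)] adjS[OF a(4)] adjS[OF a(5)] .
  have nn: "v0 \<noteq> v2" "v1 \<noteq> v3" "v2 \<noteq> v4" "v3 \<noteq> v5" using n by auto
  have f1: "far v0 v4" using far_path[of "[v0,v1,v2,v3,v4]"] a nn by simp
  have f2: "far v4 v1" using far_path[of "[v4,v3,v2,v1]"] s nn by simp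
  have f3: "far v1 v5" using far_path[of "[v1,v2,v3,v4,v5]"] a nn by simp
  have f4: "far v5 v0" using far_path[of "[v5,v4,v3,v2,v1,v0]"] s nn by simp
  have "\<not> far v0 v1" "\<not> far v4 v5" using notfar_adj a by blast+
  moreover have "v0 \<noteq> v1" "v4 \<noteq> v5" using adjD a by blast+
  ultimately show False using c4[OF f1 f2 f3 f4] ch by blast
qed

end


context tree_ctx
begin

lemma goodI:
  assumes "c \<in> fst T"
    "\<And>u w w'. adj T c u \<Longrightarrow> adj T u w \<Longrightarrow> adj T u w' \<Longrightarrow> w \<noteq> c \<Longrightarrow> w' \<noteq> c \<Longrightarrow> w = w'"
    "\<And>u w x. adj T c u \<Longrightarrow> adj T u w \<Longrightarrow> w \<noteq> c \<Longrightarrow> adj T w x \<Longrightarrow> x = u"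
  shows "good T c"
  using assms unfolding good_def by blast

lemma goodD:
  assumes "good T c"
  shows "c \<in> fst T"
    "\<And>u w w'. adj T c u \<Longrightarrow> adj T u w \<Longrightarrow> adj T u w' \<Longrightarrow> w \<noteq> c \<Longrightarrow> w' \<noteq> c \<Longrightarrow> w = w'"
    "\<And>u w x. adj T c u \<Longrightarrow> adj T u w \<Longrightarrow> w \<noteq> c \<Longrightarrow> adj T w x \<Longrightarrow> x = u"
proof -
  show "c \<in> fst T" using assms unfolding good_def by blast
  fix u w w' assume "adj T c u" "adj T u w" "adj T u w'" "w \<noteq> c" "w' \<noteq> c"
  moreover have "u \<in> fst T" "w \<in> fst T" "w' \<in> fst T" using adjD calculation by blast+
  ultimately show "w = w'" using assms unfolding good_def by blast
next
  fix u w x assume "adj T c u" "adj T u w" "w \<noteq> c" "adj T w x"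
  moreover have "u \<in> fst T" "w \<in> fst T" "x \<in> fst T" using adjD calculation by blast+
  ultimately show "x = u" using assms unfolding good_def by blast
qed

lemma chordal_good:
  assumes ch: "\<not> has_induced_cycle_ge4 (graph_complement (graph_square T))"
    and card: "card (fst T) \<ge> 2"
  shows "\<exists>c. good T c"
proof (cases "\<exists>c a b d. adj T c a \<and> adj T c b \<and> adj T c d \<and> a \<noteq> b \<and> a \<noteq> d \<and> b \<noteq> d")
  case True
  then obtain c a b d where abd: "adj T c a" "adj T c b" "adj T c d" "a \<noteq> b" "a \<noteq> d" "b \<noteq> d"
    by blast
  have two: "\<And>u. \<exists>p q. adj T c p \<and> adj T c q \<and> p \<noteq> q \<and> p \<noteq> u \<and> q \<noteq> u"
  proof -
    fix u show "\<exists>p q. adj T c p \<and> adj T c q \<and> p \<noteq> q \<and> p \<noteq> u \<and> q \<noteq> u"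
    proof (cases "u = a")
      case True thus ?thesis using abd by blast
    next
      case False
      show ?thesis
      proof (cases "u = b")
        case True thus ?thesis using abd \<open>u \<noteq> a\<close> by blast
      next
        case False thus ?thesis using abd \<open>u \<noteq> a\<close> by blast
      qed
    qed
  qed
  have "good T c"
  proof (rule goodI)
    show "c \<in> fst T" using adjD abd by blast
  next
    fix u w w' assume h: "adj T c u" "adj T u w" "adj T u w'" "w \<noteq> c" "w' \<noteq> c"
    show "w = w'"
    proof (rule ccontr)
      assume ww: "w \<noteq> w'"
      obtain p q where pq: "adj T c p" "adj T c q" "p \<noteq> q" "p \<noteq> u" "q \<noteq> u" using two by blast
      show False using F1[OF ch adjS[OF h(1)] h(2) h(3) pq(1) pq(2) ww pq(3) h(4) h(5) pq(4) pq(5)] .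
    qed
  next
    fix u w x assume h: "adj T c u" "adj T u w" "w \<noteq> c" "adj T w x"
    show "x = u"
    proof (rule ccontr)
      assume xu: "x \<noteq> u"
      obtain p q where pq: "adj T c p" "adj T c q" "p \<noteq> q" "p \<noteq> u" "q \<noteq> u" using two by blast
      show False using F2[OF ch pq(1) pq(2) h(1) pq(3) pq(4) pq(5) h(2) h(3) h(4) xu] .
    qed
  qed
  thus ?thesis by blast
next
  case False
  hence deg2: "\<And>c a b d. adj T c a \<Longrightarrow> adj T c b \<Longrightarrow> adj T c d \<Longrightarrow> a = b \<or> a = d \<or> b = d"
    by blast
  have "fst T \<noteq> {}" using card by auto
  then obtain x where x: "x \<in> fst T" by blast
  have "fst T \<noteq> {x}" using card by auto
  then obtain y where y: "y \<in> fst T" "y \<noteq> x" using x by blast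
  have "(x,y) \<in> {(u,v). adj T u v}\<^sup>*" using conn x y unfolding connected_graph_def by blast
  then obtain p1 where "adj T x p1" using y(2) by (cases rule: converse_rtranclE) auto
  show ?thesis
  proof (cases "good T x")
    case True thus ?thesis by blast
  next
    case False
    from False x obtain u where u: "u \<in> fst T" "adj T x u"
      "\<not> ((\<forall>w\<in>fst T. \<forall>w'\<in>fst T. adj T u w \<longrightarrow> adj T u w' \<longrightarrow> w \<noteq> x \<longrightarrow> w' \<noteq> x \<longrightarrow> w = w') \<and>
       (\<forall>w\<in>fst T. \<forall>z\<in>fst T. adj T u w \<longrightarrow> w \<noteq> x \<longrightarrow> adj T w z \<longrightarrow> z = u))"
      unfolding good_def by blast
    have "\<not> (\<exists>w w'. adj T u w \<and> adj T u w' \<and> w \<noteq> x \<and> w' \<noteq> x \<and> w \<noteq> w')"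
      using deg2 adjS[OF u(2)] by blast
    then obtain w z where wz: "adj T u w" "w \<noteq> x" "adj T w z" "z \<noteq> u" using u(3) by blast
    define p0 p1 p2 p3 where "p0 = x" "p1 = u" "p2 = w" "p3 = z"
    have e: "adj T p0 p1" "adj T p1 p2" "adj T p2 p3" "p0 \<noteq> p2" "p1 \<noteq> p3"
      using wz u p0_p1_p2_p3_def by auto
    have es: "adj T p1 p0" "adj T p2 p1" "adj T p3 p2" using adjS[OF e(1)] adjS[OF e(2)] adjS[OF e(3)] .
    have nb1: "\<And>y. adj T p1 y \<Longrightarrow> y = p0 \<or> y = p2" using deg2 es(1) e(2,4) by blast
    have nb2: "\<And>y. adj T p2 y \<Longrightarrow> y = p1 \<or> y = p3" using deg2 es(2) e(3,5) by blast
    show ?thesis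
    proof (cases "\<exists>r. adj T p3 r \<and> r \<noteq> p2")
      case True
      then obtain r where r: "adj T p3 r" "r \<noteq> p2" by blast
      have noq: "\<And>q. adj T p0 q \<Longrightarrow> q = p1"
      proof (rule ccontr)
        fix q assume q: "adj T p0 q" "q \<noteq> p1"
        then show False using F3[OF ch, of q p0 p1 p2 p3 r] e r adjS[OF q(1)] by simp
      qed
      have rleaf: "\<And>r'. adj T r r' \<Longrightarrow> r' = p3"
      proof (rule ccontr)
        fix r' assume "adj T r r'" "r' \<noteq> p3"
        then show False using F3[OF ch, of p0 p1 p2 p3 r r'] e r by simp
      qed
      have nb3: "\<And>y. adj T p3 y \<Longrightarrow> y = p2 \<or> y = r" using deg2 es(3) r by blast
      have "good T p2"
      proof (rule goodI)
        show "p2 \<in> fst T" using adjD e by blast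
      next
        fix u' w1 w2 assume h: "adj T p2 u'" "adj T u' w1" "adj T u' w2" "w1 \<noteq> p2" "w2 \<noteq> p2"
        from nb2[OF h(1)] show "w1 = w2"
        proof
          assume "u' = p1" thus ?thesis using nb1 h by metis
        next
          assume "u' = p3" thus ?thesis using nb3 h by metis
        qed
      next
        fix u' w1 x1 assume h: "adj T p2 u'" "adj T u' w1" "w1 \<noteq> p2" "adj T w1 x1"
        from nb2[OF h(1)] show "x1 = u'"
        proof
          assume "u' = p1" thus ?thesis using nb1 h noq by metis
        next
          assume "u' = p3" thus ?thesis using nb3 h rleaf by metis
        qed
      qed
      thus ?thesis by blast
    next
      case False
      then have leaf3: "\<And>y. adj T p3 y \<Longrightarrow> y = p2" by blast
      have qleaf: "\<And>q q'. adj T p0 q \<Longrightarrow> q \<noteq> p1 \<Longrightarrow> adj T q q' \<Longrightarrow> q' = p0"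
      proof (rule ccontr)
        fix q q' assume q: "adj T p0 q" "q \<noteq> p1" "adj T q q'" "q' \<noteq> p0"
        then show False using F3[OF ch, of q' q p0 p1 p2 p3] e adjS[OF q(1)] adjS[OF q(3)] by simp
      qed
      have "good T p1"
      proof (rule goodI)
        show "p1 \<in> fst T" using adjD e by blast
      next
        fix u' w1 w2 assume h: "adj T p1 u'" "adj T u' w1" "adj T u' w2" "w1 \<noteq> p1" "w2 \<noteq> p1"
        show "w1 = w2"
        proof (cases "u' = p0")
          case True thus ?thesis using deg2[of p0 p1 w1 w2] e h by blast
        next
          case False
          then have "u' = p2" using nb1[OF h(1)] by blast
          thus ?thesis using nb2 h by metis
        qed
      next
        fix u' w1 x1 assume h: "adj T p1 u'" "adj T u' w1" "w1 \<noteq> p1" "adj T w1 x1"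
        show "x1 = u'"
        proof (cases "u' = p0")
          case True thus ?thesis using qleaf h by blast
        next
          case False
          then have "u' = p2" using nb1[OF h(1)] by blast
          thus ?thesis using nb2 h leaf3 by metis
        qed
      qed
      thus ?thesis by blast
    qed
  qed
qed

lemma good_chordal:
  assumes g: "good T c"
  shows "\<not> has_induced_cycle_ge4 (graph_complement (graph_square T))"
proof
  assume "has_induced_cycle_ge4 (graph_complement (graph_square T))"
  then obtain vs where vs: "length vs \<ge> 4" "distinct vs"
    "set vs \<subseteq> fst (graph_complement (graph_square T))"
    "\<forall>i<length vs. \<forall>j<length vs. adj (graph_complement (graph_square T)) (vs!i) (vs!j) \<longleftrightarrow>
        (j = (i+1) mod length vs \<or> i = (j+1) mod length vs)"
    unfolding has_induced_cycle_ge4_def apply (elim exE conjE) apply (rule that) by assumption+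
  note g1 = goodD(2)[OF g] and g2 = goodD(3)[OF g]
  define W where "W = {w. w \<noteq> c \<and> (\<exists>u. adj T c u \<and> adj T u w)}"
  have cover: "\<And>y. y \<in> fst T \<Longrightarrow> y = c \<or> adj T c y \<or> y \<in> W"
  proof -
    fix y assume "y \<in> fst T"
    then have "(c,y) \<in> {(u,v). adj T u v}\<^sup>*" using conn goodD(1)[OF g]
      unfolding connected_graph_def by blast
    then show "y = c \<or> adj T c y \<or> y \<in> W"
    proof (induction rule: rtrancl_induct)
      case base thus ?case by simp
    next
      case (step a b)
      then have ab: "adj T a b" by simp
      from step.IH show ?case
      proof (elim disjE)
        assume "a = c" thus ?thesis using ab by simp
      next
        assume "adj T c a" thus ?thesis using ab W_def by blast
      next
        assume "a \<in> W"
        then obtain u where "a \<noteq> c" "adj T c u" "adj T u a" using W_def by blast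
        thus ?thesis using g2 ab by blast
      qed
    qed
  qed
  have fstc: "fst (graph_complement (graph_square T)) = fst T"
    by (simp add: graph_complement_def graph_square_def)
  show False
  proof (rule split_no_c4[of vs W "fst T - W" "graph_complement (graph_square T)"])
    show "\<forall>x\<in>set vs. x \<in> W \<or> x \<in> fst T - W" using vs(3) fstc by auto
  next
    show "\<forall>x\<in>W. \<forall>y\<in>W. x \<noteq> y \<longrightarrow> adj (graph_complement (graph_square T)) x y"
    proof (intro ballI impI)
      fix w w' assume w: "w \<in> W" "w' \<in> W" "w \<noteq> w'"
      obtain u where u: "w \<noteq> c" "adj T c u" "adj T u w" using w W_def by blast
      obtain u' where u': "w' \<noteq> c" "adj T c u'" "adj T u' w'" using w W_def by blast
      have mem: "w \<in> fst T" "w' \<in> fst T" using adjD u u' by blast+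
      have na: "\<not> adj T w w'"
      proof
        assume "adj T w w'"
        then have "w' = u" using g2[OF u(2) u(3) u(1)] by simp
        then have "adj T u' u" using u'(3) by simp
        then show False using no_triangle[OF u'(2) _ adjS[OF u(2)]] by simp
      qed
      have nc: "\<not> (\<exists>z\<in>fst T. adj T w z \<and> adj T z w')"
      proof
        assume "\<exists>z\<in>fst T. adj T w z \<and> adj T z w'"
        then obtain z where z: "adj T w z" "adj T z w'" by blast
        have "z = u" using g2[OF u(2) u(3) u(1) z(1)] .
        moreover have "z = u'" using g2[OF u'(2) u'(3) u'(1) adjS[OF z(2)]] .
        ultimately have "u = u'" by simp
        then show False using g1[OF u(2) u(3) _ u(1) u'(1)] u'(3) w(3) by simp
      qed
      show "adj (graph_complement (graph_square T)) w w'"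
        unfolding CA_far far_def using mem w(3) na nc by blast
    qed
  next
    show "\<forall>x\<in>fst T - W. \<forall>y\<in>fst T - W. \<not> adj (graph_complement (graph_square T)) x y"
    proof (intro ballI)
      fix x y assume x: "x \<in> fst T - W" and y: "y \<in> fst T - W"
      have cx: "x = c \<or> adj T c x"
      proof -
        have "x = c \<or> adj T c x \<or> x \<in> W" using x by (intro cover) simp
        thus ?thesis using x by simp
      qed
      have cy: "y = c \<or> adj T c y"
      proof -
        have "y = c \<or> adj T c y \<or> y \<in> W" using y by (intro cover) simp
        thus ?thesis using y by simp
      qed
      have "\<not> far x y"
      proof (cases "x = y")
        case True thus ?thesis by (simp add: far_irrefl)
      next
        case xy: False
        show ?thesis
        proof (cases "x = c")
          case True
          then have "adj T x y" using cy xy by simp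
          thus ?thesis by (rule notfar_adj)
        next
          case xc: False
          then have acx: "adj T c x" using cx by simp
          show ?thesis
          proof (cases "y = c")
            case True
            then have "adj T x y" using adjS[OF acx] by simp
            thus ?thesis by (rule notfar_adj)
          next
            case False
            then have "adj T c y" using cy by simp
            thus ?thesis using notfar_common[OF adjS[OF acx]] by simp
          qed
        qed
      qed
      thus "\<not> adj (graph_complement (graph_square T)) x y" unfolding CA_far .
    qed
  next
    show "distinct vs" by (rule vs(2))
  next
    show "length vs \<ge> 4" by (rule vs(1))
  next
    show "\<forall>i<length vs. \<forall>j<length vs. adj (graph_complement (graph_square T)) (vs!i) (vs!j) \<longleftrightarrow>
        (j = (i+1) mod length vs \<or> i = (j+1) mod length vs)" by (rule vs(4))
  qed
qed

end


lemma good_iso: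
  assumes iso: "graph_iso G H" and g: "good H c'"
  shows "\<exists>c. good G c"
proof -
  obtain f where bij: "bij_betw f (fst G) (fst H)"
    and ad: "\<forall>x\<in>fst G. \<forall>y\<in>fst G. adj G x y \<longleftrightarrow> adj H (f x) (f y)"
    using iso unfolding graph_iso_def by blast
  have c'H: "c' \<in> fst H" using g unfolding good_def by blast
  define c where "c = inv_into (fst G) f c'"
  have cG: "c \<in> fst G" using c_def c'H bij by (metis bij_betw_def inv_into_into)
  have fc: "f c = c'" using c_def c'H bij by (metis bij_betw_inv_into_right)
  have inj: "\<And>x y. x \<in> fst G \<Longrightarrow> y \<in> fst G \<Longrightarrow> f x = f y \<Longrightarrow> x = y"
    using bij unfolding bij_betw_def inj_on_def by blast
  have into: "\<And>x. x \<in> fst G \<Longrightarrow> f x \<in> fst H" using bij bij_betw_apply by metis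
  have "good G c" unfolding good_def
  proof (intro conjI ballI impI)
    show "c \<in> fst G" by (rule cG)
  next
    fix u w w' assume h: "u \<in> fst G" "adj G c u" "w \<in> fst G" "w' \<in> fst G" "adj G u w" "adj G u w'"
      "w \<noteq> c" "w' \<noteq> c"
    have "adj H c' (f u)" "adj H (f u) (f w)" "adj H (f u) (f w')" using h ad cG fc by auto
    moreover have "f w \<noteq> c'" "f w' \<noteq> c'" using h inj cG fc by metis+
    ultimately have "f w = f w'" using g into h unfolding good_def by blast
    thus "w = w'" using inj h by blast
  next
    fix u w x assume h: "u \<in> fst G" "adj G c u" "w \<in> fst G" "x \<in> fst G" "adj G u w" "w \<noteq> c"
      "adj G w x"
    have "adj H c' (f u)" "adj H (f u) (f w)" "adj H (f w) (f x)" using h ad cG fc by auto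
    moreover have "f w \<noteq> c'" using h inj cG fc by metis
    ultimately have "f x = f u" using g into h unfolding good_def by blast
    thus "x = u" using inj h by blast
  qed
  thus ?thesis by blast
qed

lemma adj_path: "adj (path_graph n) x y \<longleftrightarrow> (y = Suc x \<and> y < n) \<or> (x = Suc y \<and> x < n)"
  by (auto simp: adj_def path_graph_def doubleton_eq_iff)

lemma adj_star: "adj (star_graph t) x y \<longleftrightarrow> (x = 0 \<and> 1 \<le> y \<and> y \<le> t) \<or> (y = 0 \<and> 1 \<le> x \<and> x \<le> t)"
  by (auto simp: adj_def star_graph_def doubleton_eq_iff)

lemma adj_wstar: "adj (whiskered_star n m) p q \<longleftrightarrow>
   (p = (0,0) \<and> (\<exists>i. q = (i,0) \<and> 1 \<le> i \<and> i \<le> n)) \<or>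
   (q = (0,0) \<and> (\<exists>i. p = (i,0) \<and> 1 \<le> i \<and> i \<le> n)) \<or>
   (\<exists>i. 1 \<le> i \<and> i \<le> m \<and> ((p = (i,0) \<and> q = (i,1)) \<or> (p = (i,1) \<and> q = (i,0))))"
  by (auto simp: adj_def whiskered_star_def doubleton_eq_iff)

lemma fst_path: "fst (path_graph n) = {0..<n}" by (simp add: path_graph_def)
lemma fst_star: "fst (star_graph t) = {0..t}" by (simp add: star_graph_def)
lemma fst_wstar: "fst (whiskered_star n m) = {(i, 0) | i. i \<le> n} \<union> {(i, 1) | i. 1 \<le> i \<and> i \<le> m}"
  by (simp add: whiskered_star_def)

lemma good_path: "2 \<le> n \<Longrightarrow> n \<le> 5 \<Longrightarrow> \<exists>c. good (path_graph n) c"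
proof -
  assume n: "2 \<le> n" "n \<le> 5"
  then consider "n = 2" | "n = 3" | "n = 4" | "n = 5" by linarith
  then show ?thesis
  proof cases
    case 1 then have "good (path_graph n) 0" by (auto simp: good_def adj_path fst_path)
    thus ?thesis by blast
  next
    case 2 then have "good (path_graph n) 1" by (auto simp: good_def adj_path fst_path)
    thus ?thesis by blast
  next
    case 3 then have "good (path_graph n) 1" by (auto simp: good_def adj_path fst_path)
    thus ?thesis by blast
  next
    case 4 then have "good (path_graph n) 2" by (auto simp: good_def adj_path fst_path)
    thus ?thesis by blast
  qed
qed

lemma good_star: "good (star_graph t) 0"
  by (auto simp: good_def adj_star fst_star)

lemma good_wstar: "good (whiskered_star n m) (0,0)"
  by (auto simp: good_def adj_wstar fst_wstar)



context tree_ctx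
begin

lemma finV: "finite (fst T)" using simple unfolding simple_graph_def by blast

lemma good_iso_exists:
  assumes g: "good T c" and card: "card (fst T) \<ge> 2"
  shows "(\<exists>t. 1 \<le> t \<and> graph_iso T (star_graph t)) \<or>
     (\<exists>n m. 1 \<le> n \<and> 1 \<le> m \<and> m \<le> n \<and> graph_iso T (whiskered_star n m))"
proof -
  note g1 = goodD(2)[OF g] and g2 = goodD(3)[OF g]
  have cV: "c \<in> fst T" using goodD(1)[OF g] .
  define N where "N = {u. adj T c u}"
  define W where "W = {w. w \<noteq> c \<and> (\<exists>u. adj T c u \<and> adj T u w)}"
  have cover: "\<And>y. y \<in> fst T \<Longrightarrow> y = c \<or> adj T c y \<or> y \<in> W"
  proof -
    fix y assume "y \<in> fst T"
    then have "(c,y) \<in> {(u,v). adj T u v}\<^sup>*" using conn cV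
      unfolding connected_graph_def by blast
    then show "y = c \<or> adj T c y \<or> y \<in> W"
    proof (induction rule: rtrancl_induct)
      case base thus ?case by simp
    next
      case (step a b)
      then have ab: "adj T a b" by simp
      from step.IH show ?case
      proof (elim disjE)
        assume "a = c" thus ?thesis using ab by simp
      next
        assume "adj T c a" thus ?thesis using ab W_def by blast
      next
        assume "a \<in> W"
        then obtain u where "a \<noteq> c" "adj T c u" "adj T u a" using W_def by blast
        thus ?thesis using g2 ab by blast
      qed
    qed
  qed
  have NV: "N \<subseteq> fst T" using adjD N_def by blast
  have WV: "W \<subseteq> fst T" using adjD W_def by blast
  have Vdec: "fst T = insert c (N \<union> W)" using cover NV WV cV N_def by blast
  have finN: "finite N" using NV finV finite_subset by blast
  have cN: "c \<notin> N" using adjD N_def by blast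
  have cW: "c \<notin> W" using W_def by blast
  have NW: "\<And>x. x \<in> N \<Longrightarrow> x \<in> W \<Longrightarrow> False"
  proof -
    fix x assume "x \<in> N" "x \<in> W"
    then obtain u where h: "adj T c x" "adj T c u" "adj T u x" using N_def W_def by blast
    show False using no_triangle[OF h(2) h(3) adjS[OF h(1)]] .
  qed
  define par where "par w = (SOME u. adj T c u \<and> adj T u w)" for w
  have par: "\<And>w. w \<in> W \<Longrightarrow> adj T c (par w) \<and> adj T (par w) w"
  proof -
    fix w assume "w \<in> W"
    then have "\<exists>u. adj T c u \<and> adj T u w" using W_def by blast
    thus "adj T c (par w) \<and> adj T (par w) w" unfolding par_def by (rule someI_ex)
  qed
  have par_uniq: "\<And>w u. w \<in> W \<Longrightarrow> adj T c u \<Longrightarrow> adj T u w \<Longrightarrow> u = par w"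
  proof (rule ccontr)
    fix w u assume w: "w \<in> W" and cu: "adj T c u" and uw: "adj T u w" and ne: "u \<noteq> par w"
    have p: "adj T c (par w)" "adj T (par w) w" using par[OF w] by blast+
    have wc: "w \<noteq> c" using w W_def by blast
    have "distinct [c,u,w,par w]" using adjD[OF cu] adjD[OF uw] adjD[OF p(1)] adjD[OF p(2)] ne wc
      by auto
    moreover have "walk T [c,u,w,par w]" using cu uw adjS[OF p(2)] by simp
    ultimately show False using cycle_of_list[of "[c,u,w,par w]"] adjS[OF p(1)] by simp
  qed
  have leaf: "\<And>w x. w \<in> W \<Longrightarrow> adj T w x \<Longrightarrow> x = par w"
    using g2 par W_def by blast
  define N1 where "N1 = {u \<in> N. \<exists>w. adj T u w \<and> w \<noteq> c}"
  have parN1: "\<And>w. w \<in> W \<Longrightarrow> par w \<in> N1"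
    using par N1_def N_def W_def by blast
  have N1sub: "N1 \<subseteq> N" using N1_def by blast
  have N1par: "\<And>u. u \<in> N1 \<Longrightarrow> \<exists>w\<in>W. par w = u"
  proof -
    fix u assume "u \<in> N1"
    then obtain w where "adj T c u" "adj T u w" "w \<noteq> c" using N1_def N_def by blast
    moreover then have "w \<in> W" using W_def by blast
    ultimately show "\<exists>w\<in>W. par w = u" using par_uniq by metis
  qed
  have par_inj: "\<And>w w'. w \<in> W \<Longrightarrow> w' \<in> W \<Longrightarrow> par w = par w' \<Longrightarrow> w = w'"
  proof -
    fix w w' assume "w \<in> W" "w' \<in> W" "par w = par w'"
    moreover have "w \<noteq> c" "w' \<noteq> c" using calculation W_def by blast+
    ultimately show "w = w'" using g1 par by metis
  qed
  have NN: "\<And>x y. x \<in> N \<Longrightarrow> y \<in> N \<Longrightarrow> \<not> adj T x y"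
  proof
    fix x y assume h: "x \<in> N" "y \<in> N" "adj T x y"
    then have "adj T c x" "adj T c y" using N_def by blast+
    thus False using no_triangle[OF _ h(3) adjS[of T c y]] by blast
  qed
  have adjchar: "\<And>x y. x \<in> fst T \<Longrightarrow> y \<in> fst T \<Longrightarrow> adj T x y \<longleftrightarrow>
     (x = c \<and> y \<in> N) \<or> (y = c \<and> x \<in> N) \<or> (x \<in> N \<and> y \<in> W \<and> x = par y) \<or> (y \<in> N \<and> x \<in> W \<and> y = par x)"
  proof -
    fix x y assume x: "x \<in> fst T" and y: "y \<in> fst T"
    show "adj T x y \<longleftrightarrow>
     (x = c \<and> y \<in> N) \<or> (y = c \<and> x \<in> N) \<or> (x \<in> N \<and> y \<in> W \<and> x = par y) \<or> (y \<in> N \<and> x \<in> W \<and> y = par x)"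
    proof
      assume a: "adj T x y"
      have "x = c \<or> x \<in> N \<or> x \<in> W" using x Vdec by blast
      moreover have "y = c \<or> y \<in> N \<or> y \<in> W" using y Vdec by blast
      ultimately show "(x = c \<and> y \<in> N) \<or> (y = c \<and> x \<in> N) \<or> (x \<in> N \<and> y \<in> W \<and> x = par y) \<or> (y \<in> N \<and> x \<in> W \<and> y = par x)"
      proof (elim disjE)
        assume "x = c" "y = c" thus ?thesis using a adjD by blast
      next
        assume "x = c" "y \<in> N" thus ?thesis by blast
      next
        assume "x = c" "y \<in> W" thus ?thesis using a N_def NW by blast
      next
        assume "x \<in> N" "y = c" thus ?thesis by blast
      next
        assume "x \<in> N" "y \<in> N" thus ?thesis using a NN by blast
      next
        assume "x \<in> N" "y \<in> W" thus ?thesis using a par_uniq N_def by blast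
      next
        assume "x \<in> W" "y = c" thus ?thesis using adjS[OF a] N_def NW by blast
      next
        assume "x \<in> W" "y \<in> N" thus ?thesis using leaf a by blast
      next
        assume "x \<in> W" "y \<in> W" thus ?thesis using leaf[of x y] a parN1 N1sub NW by blast
      qed
    next
      assume "(x = c \<and> y \<in> N) \<or> (y = c \<and> x \<in> N) \<or> (x \<in> N \<and> y \<in> W \<and> x = par y) \<or> (y \<in> N \<and> x \<in> W \<and> y = par x)"
      thus "adj T x y"
      proof (elim disjE)
        assume "x = c \<and> y \<in> N" thus ?thesis using N_def by blast
      next
        assume "y = c \<and> x \<in> N" thus ?thesis using N_def adjS[of T c x] by blast
      next
        assume "x \<in> N \<and> y \<in> W \<and> x = par y" thus ?thesis using par by blast
      next
        assume "y \<in> N \<and> x \<in> W \<and> y = par x" thus ?thesis using par adjS[of T y x] by blast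
      qed
    qed
  qed
  show ?thesis
  proof (cases "N1 = {}")
    case True
    then have We: "W = {}" using parN1 by blast
    define t where "t = card N"
    have V: "fst T = insert c N" using Vdec We by simp
    have "card (fst T) = Suc t" using V finN cN t_def by simp
    then have t1: "1 \<le> t" using card by simp
    obtain gg where gg: "bij_betw gg N {1..t}"
      using finite_same_card_bij[OF finN finite_atLeastAtMost, of 1 t] t_def by force
    define f where "f x = (if x = c then 0 else gg x)" for x
    have gN: "\<And>u. u \<in> N \<Longrightarrow> 1 \<le> gg u \<and> gg u \<le> t"
    proof -
      fix u assume "u \<in> N"
      then have "gg u \<in> {1..t}" using gg bij_betw_apply by metis
      thus "1 \<le> gg u \<and> gg u \<le> t" by simp
    qed
    have ginj: "\<And>u v. u \<in> N \<Longrightarrow> v \<in> N \<Longrightarrow> gg u = gg v \<Longrightarrow> u = v"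
      using gg unfolding bij_betw_def inj_on_def by blast
    have gsurj: "\<And>i. 1 \<le> i \<Longrightarrow> i \<le> t \<Longrightarrow> \<exists>u\<in>N. gg u = i"
      using gg unfolding bij_betw_def by (metis atLeastAtMost_iff imageE)
    have fc: "f c = 0" using f_def by simp
    have fN: "\<And>u. u \<in> N \<Longrightarrow> f u = gg u" using f_def cN by auto
    have "bij_betw f (fst T) (fst (star_graph t))"
      unfolding bij_betw_def
    proof
      show "inj_on f (fst T)"
      proof (rule inj_onI)
        fix x y assume x: "x \<in> fst T" and y: "y \<in> fst T" and e: "f x = f y"
        have x2: "x = c \<or> x \<in> N" using x V by blast
        have y2: "y = c \<or> y \<in> N" using y V by blast
        from x2 y2 show "x = y"
        proof (elim disjE)
          assume "x = c" "y = c" thus ?thesis by simp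
        next
          assume "x = c" "y \<in> N" thus ?thesis using e fc fN[of y] gN[of y] by simp
        next
          assume "x \<in> N" "y = c" thus ?thesis using e fc fN[of x] gN[of x] by simp
        next
          assume "x \<in> N" "y \<in> N" thus ?thesis using e fN ginj by simp
        qed
      qed
    next
      show "f ` fst T = fst (star_graph t)"
      proof
        show "f ` fst T \<subseteq> fst (star_graph t)"
        proof
          fix p assume "p \<in> f ` fst T"
          then obtain x where x: "x \<in> fst T" "p = f x" by blast
          have "x = c \<or> x \<in> N" using x V by blast
          thus "p \<in> fst (star_graph t)"
          proof
            assume "x = c" thus ?thesis using x fc by (simp add: fst_star)
          next
            assume "x \<in> N" thus ?thesis using x fN gN by (simp add: fst_star)
          qed
        qed
      next
        show "fst (star_graph t) \<subseteq> f ` fst T"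
        proof
          fix i assume "i \<in> fst (star_graph t)"
          then have i: "i \<le> t" by (simp add: fst_star)
          show "i \<in> f ` fst T"
          proof (cases "i = 0")
            case True thus ?thesis using fc cV by (metis image_eqI)
          next
            case False
            then obtain u where "u \<in> N" "gg u = i" using gsurj i by (metis One_nat_def Suc_leI neq0_conv)
            thus ?thesis using fN NV by (metis image_eqI subsetD)
          qed
        qed
      qed
    qed
    moreover have "\<forall>x\<in>fst T. \<forall>y\<in>fst T. adj T x y \<longleftrightarrow> adj (star_graph t) (f x) (f y)"
    proof (intro ballI)
      fix x y assume x: "x \<in> fst T" and y: "y \<in> fst T"
      have x2: "x = c \<or> x \<in> N" using x V by blast
      have y2: "y = c \<or> y \<in> N" using y V by blast
      show "adj T x y \<longleftrightarrow> adj (star_graph t) (f x) (f y)"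
        unfolding adjchar[OF x y] adj_star using x2 y2
      proof (elim disjE)
        assume "x = c" "y = c" thus "((x = c \<and> y \<in> N) \<or> (y = c \<and> x \<in> N) \<or> (x \<in> N \<and> y \<in> W \<and> x = par y) \<or> (y \<in> N \<and> x \<in> W \<and> y = par x)) \<longleftrightarrow> ((f x = 0 \<and> 1 \<le> f y \<and> f y \<le> t) \<or> (f y = 0 \<and> 1 \<le> f x \<and> f x \<le> t))"
          using fc cN by simp
      next
        assume "x = c" "y \<in> N" thus "((x = c \<and> y \<in> N) \<or> (y = c \<and> x \<in> N) \<or> (x \<in> N \<and> y \<in> W \<and> x = par y) \<or> (y \<in> N \<and> x \<in> W \<and> y = par x)) \<longleftrightarrow> ((f x = 0 \<and> 1 \<le> f y \<and> f y \<le> t) \<or> (f y = 0 \<and> 1 \<le> f x \<and> f x \<le> t))"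
          using fc fN[of y] gN[of y] by simp
      next
        assume "x \<in> N" "y = c" thus "((x = c \<and> y \<in> N) \<or> (y = c \<and> x \<in> N) \<or> (x \<in> N \<and> y \<in> W \<and> x = par y) \<or> (y \<in> N \<and> x \<in> W \<and> y = par x)) \<longleftrightarrow> ((f x = 0 \<and> 1 \<le> f y \<and> f y \<le> t) \<or> (f y = 0 \<and> 1 \<le> f x \<and> f x \<le> t))"
          using fc fN[of x] gN[of x] by simp
      next
        assume "x \<in> N" "y \<in> N" thus "((x = c \<and> y \<in> N) \<or> (y = c \<and> x \<in> N) \<or> (x \<in> N \<and> y \<in> W \<and> x = par y) \<or> (y \<in> N \<and> x \<in> W \<and> y = par x)) \<longleftrightarrow> ((f x = 0 \<and> 1 \<le> f y \<and> f y \<le> t) \<or> (f y = 0 \<and> 1 \<le> f x \<and> f x \<le> t))"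
          using fN[of x] fN[of y] gN[of x] gN[of y] cN We by auto
      qed
    qed
    ultimately have "graph_iso T (star_graph t)" unfolding graph_iso_def by blast
    thus ?thesis using t1 by blast
  next
    case False
    define m where "m = card N1"
    define n where "n = card N"
    define N0 where "N0 = N - N1"
    have finN1: "finite N1" using finN N1sub finite_subset by blast
    have m1: "1 \<le> m" using False finN1 m_def by (simp add: Suc_leI card_gt_0_iff)
    have mn: "m \<le> n" using m_def n_def N1sub finN card_mono by blast
    have cN0: "card N0 = n - m" using N0_def n_def m_def N1sub finN1 by (simp add: card_Diff_subset)
    obtain g1 where g1b: "bij_betw g1 N1 {1..m}"
      using finite_same_card_bij[OF finN1 finite_atLeastAtMost, of 1 m] m_def by force
    obtain g0 where g0b: "bij_betw g0 N0 {Suc m..n}"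
      using finite_same_card_bij[OF _ finite_atLeastAtMost, of N0 "Suc m" n] cN0 finN N0_def by force
    define gg where "gg u = (if u \<in> N1 then g1 u else g0 u)" for u
    have g1r: "\<And>u. u \<in> N1 \<Longrightarrow> 1 \<le> g1 u \<and> g1 u \<le> m" using g1b bij_betw_apply by fastforce
    have g0r: "\<And>u. u \<in> N0 \<Longrightarrow> Suc m \<le> g0 u \<and> g0 u \<le> n" using g0b bij_betw_apply by fastforce
    have g1i: "\<And>u v. u \<in> N1 \<Longrightarrow> v \<in> N1 \<Longrightarrow> g1 u = g1 v \<Longrightarrow> u = v"
      using g1b unfolding bij_betw_def inj_on_def by blast
    have g0i: "\<And>u v. u \<in> N0 \<Longrightarrow> v \<in> N0 \<Longrightarrow> g0 u = g0 v \<Longrightarrow> u = v"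
      using g0b unfolding bij_betw_def inj_on_def by blast
    have g1s: "\<And>i. 1 \<le> i \<Longrightarrow> i \<le> m \<Longrightarrow> \<exists>u\<in>N1. g1 u = i"
      using g1b unfolding bij_betw_def by (metis atLeastAtMost_iff imageE)
    have g0s: "\<And>i. Suc m \<le> i \<Longrightarrow> i \<le> n \<Longrightarrow> \<exists>u\<in>N0. g0 u = i"
      using g0b unfolding bij_betw_def by (metis atLeastAtMost_iff imageE)
    have gN: "\<And>u. u \<in> N \<Longrightarrow> 1 \<le> gg u \<and> gg u \<le> n"
      using g1r g0r mn N0_def gg_def by fastforce
    have gN1: "\<And>u. u \<in> N1 \<Longrightarrow> gg u \<le> m" using g1r gg_def by simp
    have ginj: "\<And>u v. u \<in> N \<Longrightarrow> v \<in> N \<Longrightarrow> gg u = gg v \<Longrightarrow> u = v"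
    proof -
      fix u v assume u: "u \<in> N" and v: "v \<in> N" and e: "gg u = gg v"
      show "u = v"
      proof (cases "u \<in> N1")
        case True
        show ?thesis
        proof (cases "v \<in> N1")
          case True thus ?thesis using \<open>u \<in> N1\<close> e g1i gg_def by simp
        next
          case False thus ?thesis using \<open>u \<in> N1\<close> e g1r[of u] g0r[of v] v N0_def gg_def by simp
        qed
      next
        case False
        show ?thesis
        proof (cases "v \<in> N1")
          case True thus ?thesis using \<open>u \<notin> N1\<close> e g1r[of v] g0r[of u] u N0_def gg_def by simp
        next
          case False thus ?thesis using \<open>u \<notin> N1\<close> e g0i u v N0_def gg_def by simp
        qed
      qed
    qed
    have gsurj: "\<And>i. 1 \<le> i \<Longrightarrow> i \<le> n \<Longrightarrow> \<exists>u\<in>N. gg u = i"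
    proof -
      fix i assume i: "1 \<le> i" "i \<le> n"
      show "\<exists>u\<in>N. gg u = i"
      proof (cases "i \<le> m")
        case True
        then obtain u where "u \<in> N1" "g1 u = i" using g1s i by blast
        thus ?thesis using N1sub gg_def by auto
      next
        case False
        then obtain u where "u \<in> N0" "g0 u = i" using g0s i by (metis not_less_eq_eq)
        thus ?thesis using N0_def gg_def by auto
      qed
    qed
    have gsurj1: "\<And>i. 1 \<le> i \<Longrightarrow> i \<le> m \<Longrightarrow> \<exists>u\<in>N1. gg u = i"
      using g1s gg_def by auto
    define f where "f x = (if x = c then (0,0) else if x \<in> N then (gg x, 0) else (gg (par x), 1::nat))" for x
    have fc: "f c = (0,0)" using f_def by simp
    have fN: "\<And>u. u \<in> N \<Longrightarrow> f u = (gg u, 0)" using f_def cN by auto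
    have fW: "\<And>w. w \<in> W \<Longrightarrow> f w = (gg (par w), 1)" using f_def cW NW by auto
    have bij: "bij_betw f (fst T) (fst (whiskered_star n m))"
      unfolding bij_betw_def
    proof
      show "inj_on f (fst T)"
      proof (rule inj_onI)
        fix x y assume x: "x \<in> fst T" and y: "y \<in> fst T" and e: "f x = f y"
        have x3: "x = c \<or> x \<in> N \<or> x \<in> W" using x Vdec by blast
        have y3: "y = c \<or> y \<in> N \<or> y \<in> W" using y Vdec by blast
        from x3 y3 show "x = y"
        proof (elim disjE)
          assume "x = c" "y = c" thus ?thesis by simp
        next
          assume "x = c" "y \<in> N" thus ?thesis using e fc fN gN by fastforce
        next
          assume "x = c" "y \<in> W" thus ?thesis using e fc fW by simp
        next
          assume "x \<in> N" "y = c" thus ?thesis using e fc fN gN by fastforce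
        next
          assume "x \<in> N" "y \<in> N" thus ?thesis using e fN ginj by simp
        next
          assume "x \<in> N" "y \<in> W" thus ?thesis using e fN fW by simp
        next
          assume "x \<in> W" "y = c" thus ?thesis using e fc fW by simp
        next
          assume "x \<in> W" "y \<in> N" thus ?thesis using e fN fW by simp
        next
          assume "x \<in> W" "y \<in> W"
          then have "gg (par x) = gg (par y)" using e fW by simp
          then have "par x = par y" using ginj parN1 N1sub \<open>x \<in> W\<close> \<open>y \<in> W\<close> by blast
          thus ?thesis using par_inj \<open>x \<in> W\<close> \<open>y \<in> W\<close> by blast
        qed
      qed
    next
      show "f ` fst T = fst (whiskered_star n m)"
      proof
        show "f ` fst T \<subseteq> fst (whiskered_star n m)"
        proof
          fix p assume "p \<in> f ` fst T"
          then obtain x where x: "x \<in> fst T" "p = f x" by blast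
          have "x = c \<or> x \<in> N \<or> x \<in> W" using x Vdec by blast
          thus "p \<in> fst (whiskered_star n m)"
          proof (elim disjE)
            assume "x = c" thus ?thesis using x fc by (simp add: fst_wstar)
          next
            assume "x \<in> N" thus ?thesis using x fN gN by (auto simp: fst_wstar)
          next
            assume w: "x \<in> W"
            then have "1 \<le> gg (par x)" "gg (par x) \<le> m" using gN gN1 parN1 N1sub by blast+
            thus ?thesis using x fW w by (auto simp: fst_wstar)
          qed
        qed
      next
        show "fst (whiskered_star n m) \<subseteq> f ` fst T"
        proof
          fix p assume "p \<in> fst (whiskered_star n m)"
          then consider (a) i where "p = (i,0)" "i \<le> n" | (b) i where "p = (i,1)" "1 \<le> i" "i \<le> m"
            by (auto simp: fst_wstar)
          then show "p \<in> f ` fst T"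
          proof cases
            case (a i)
            show ?thesis
            proof (cases "i = 0")
              case True thus ?thesis using a fc cV by (metis image_eqI)
            next
              case False
              then obtain u where "u \<in> N" "gg u = i" using gsurj a by (metis One_nat_def Suc_leI neq0_conv)
              thus ?thesis using a fN NV by (metis image_eqI subsetD)
            qed
          next
            case (b i)
            then obtain u where u: "u \<in> N1" "gg u = i" using gsurj1 by blast
            then obtain w where "w \<in> W" "par w = u" using N1par by blast
            thus ?thesis using b fW WV u by (metis image_eqI subsetD)
          qed
        qed
      qed
    qed
    have adjf: "\<forall>x\<in>fst T. \<forall>y\<in>fst T. adj T x y \<longleftrightarrow> adj (whiskered_star n m) (f x) (f y)"
    proof (intro ballI)
      fix x y assume x: "x \<in> fst T" and y: "y \<in> fst T"
      have x3: "x = c \<or> x \<in> N \<or> x \<in> W" using x Vdec by blast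
      have y3: "y = c \<or> y \<in> N \<or> y \<in> W" using y Vdec by blast
      have "((x = c \<and> y \<in> N) \<or> (y = c \<and> x \<in> N) \<or> (x \<in> N \<and> y \<in> W \<and> x = par y) \<or> (y \<in> N \<and> x \<in> W \<and> y = par x)) \<longleftrightarrow>
   ((f x = (0,0) \<and> (\<exists>i. f y = (i,0) \<and> 1 \<le> i \<and> i \<le> n)) \<or>
   (f y = (0,0) \<and> (\<exists>i. f x = (i,0) \<and> 1 \<le> i \<and> i \<le> n)) \<or>
   (\<exists>i. 1 \<le> i \<and> i \<le> m \<and> ((f x = (i,0) \<and> f y = (i,1)) \<or> (f x = (i,1) \<and> f y = (i,0)))))"
        using x3 y3
      proof (elim disjE)
        assume "x = c" "y = c" thus ?thesis using fc cN by simp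
      next
        assume "x = c" "y \<in> N" thus ?thesis using fc fN gN by auto
      next
        assume "x = c" "y \<in> W" thus ?thesis using fc fW cN cW NW by auto
      next
        assume "x \<in> N" "y = c" thus ?thesis using fc fN gN by auto
      next
        assume "x \<in> N" "y \<in> N" thus ?thesis using fN gN cN NW by fastforce
      next
        assume xy: "x \<in> N" "y \<in> W"
        have pr: "par y \<in> N" "gg (par y) \<le> m" using parN1 N1sub gN1 xy by blast+
        have "x = par y \<longleftrightarrow> gg x = gg (par y)" using ginj xy pr by blast
        thus ?thesis using xy fN fW gN pr cN cW NW by auto
      next
        assume xy: "x \<in> W" "y = c" thus ?thesis using fc fW cN cW NW by auto
      next
        assume xy: "x \<in> W" "y \<in> N"
        have pr: "par x \<in> N" "gg (par x) \<le> m" using parN1 N1sub gN1 xy by blast+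
        have "y = par x \<longleftrightarrow> gg y = gg (par x)" using ginj xy pr by blast
        thus ?thesis using xy fN fW gN pr cN cW NW by auto
      next
        assume "x \<in> W" "y \<in> W" thus ?thesis using fW cN cW NW by auto
      qed
      then show "adj T x y \<longleftrightarrow> adj (whiskered_star n m) (f x) (f y)"
        by (simp only: adjchar[OF x y] adj_wstar)
    qed
    have "graph_iso T (whiskered_star n m)" unfolding graph_iso_def using bij adjf by blast
    moreover have "1 \<le> n" using m1 mn by simp
    ultimately show ?thesis using m1 mn by blast
  qed
qed

end


theorem corollary3p12:
  fixes T :: "'a graph"
  assumes "is_tree T" and "card (fst T) \<ge> 2"
  shows "chordal (graph_complement (graph_square T)) \<longleftrightarrow>
     (\<exists>n. 2 \<le> n \<and> n \<le> 5 \<and> graph_iso T (path_graph n)) \<or>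
     (\<exists>t. 1 \<le> t \<and> graph_iso T (star_graph t)) \<or>
     (\<exists>n m. 1 \<le> n \<and> 1 \<le> m \<and> m \<le> n \<and> graph_iso T (whiskered_star n m))"
proof -
  interpret tree_ctx T by unfold_locales (rule assms(1))
  show ?thesis
  proof
    assume "chordal (graph_complement (graph_square T))"
    then have ch: "\<not> has_induced_cycle_ge4 (graph_complement (graph_square T))"
      by (simp add: chordal_def)
    obtain c where "good T c" using chordal_good[OF ch assms(2)] by blast
    then show "(\<exists>n. 2 \<le> n \<and> n \<le> 5 \<and> graph_iso T (path_graph n)) \<or>
     (\<exists>t. 1 \<le> t \<and> graph_iso T (star_graph t)) \<or>
     (\<exists>n m. 1 \<le> n \<and> 1 \<le> m \<and> m \<le> n \<and> graph_iso T (whiskered_star n m))"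
      using good_iso_exists[OF _ assms(2)] by blast
  next
    assume "(\<exists>n. 2 \<le> n \<and> n \<le> 5 \<and> graph_iso T (path_graph n)) \<or>
     (\<exists>t. 1 \<le> t \<and> graph_iso T (star_graph t)) \<or>
     (\<exists>n m. 1 \<le> n \<and> 1 \<le> m \<and> m \<le> n \<and> graph_iso T (whiskered_star n m))"
    then have "\<exists>c. good T c"
    proof (elim disjE exE conjE)
      fix n assume "2 \<le> n" "n \<le> 5" "graph_iso T (path_graph n)"
      then obtain c' where "good (path_graph n) c'" using good_path by blast
      thus ?thesis by (rule good_iso[OF \<open>graph_iso T (path_graph n)\<close>])
    next
      fix t assume "1 \<le> t" "graph_iso T (star_graph t)"
      thus ?thesis using good_iso[OF _ good_star] by blast
    next
      fix n m assume "graph_iso T (whiskered_star n m)"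
      thus ?thesis using good_iso[OF _ good_wstar] by blast
    qed
    then obtain c where "good T c" by blast
    then show "chordal (graph_complement (graph_square T))"
      using good_chordal by (simp add: chordal_def)
  qed
qed


end
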